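(* Let $B\subset\mathbb{R}^n$, $n\geq2$, be a ball of radius $R\leq R_m$. Let $u\in H^2(B)$ satisfy $(\Delta+k^2)u=\varphi$ for some $\varphi\in C^\alpha(\overline B)$, $0\leq\alpha\leq1$, and $k\geq0$. If $u\in H^2_0(B)$, then \[ \sup_{\partial B}|\varphi|\leq C R^\alpha\|\varphi\|_{C^\alpha(\overline B)} \] for some finite constant $C=C(n,R_m,k)$ depending only on $n,R_m,k$.
   Context: $\|\cdot\|_{C^\alpha}$ denotes the standard Hölder norm; $H^2_0(B)$ is the closure of $C_c^\infty(B)$ in $H^2(B)$. *)

theory Defs
  imports "HOL-Analysis.Analysis"
begin

definition partial :: "'n::finite \<Rightarrow> (real^'n \<Rightarrow> real) \<Rightarrow> real^'n \<Rightarrow> real" where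
  "partial i f x = deriv (\<lambda>t. f (x + t *\<^sub>R axis i 1)) 0"

definition iter_partial :: "'n::finite list \<Rightarrow> (real^'n \<Rightarrow> real) \<Rightarrow> real^'n \<Rightarrow> real" where
  "iter_partial is f = foldr partial is f"

definition smooth_fun :: "(real^'n::finite \<Rightarrow> real) \<Rightarrow> bool" where
  "smooth_fun f \<longleftrightarrow> (\<forall>is. continuous_on UNIV (iter_partial is f) \<and>
      (\<forall>i x. (\<lambda>t. iter_partial is f (x + t *\<^sub>R axis i 1)) differentiable (at 0)))"

definition test_fun :: "(real^'n::finite) set \<Rightarrow> (real^'n \<Rightarrow> real) \<Rightarrow> bool" where
  "test_fun U \<psi> \<longleftrightarrow> smooth_fun \<psi> \<and> compact (closure {x. \<psi> x \<noteq> 0})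
      \<and> closure {x. \<psi> x \<noteq> 0} \<subseteq> U"

definition L2_on :: "(real^'n::finite) set \<Rightarrow> (real^'n \<Rightarrow> real) \<Rightarrow> bool" where
  "L2_on U f \<longleftrightarrow> set_borel_measurable lebesgue U f \<and> set_integrable lebesgue U (\<lambda>x. (f x)\<^sup>2)"

definition weak_deriv :: "(real^'n::finite) set \<Rightarrow> 'n list \<Rightarrow> (real^'n \<Rightarrow> real) \<Rightarrow> (real^'n \<Rightarrow> real) \<Rightarrow> bool" where
  "weak_deriv U is u g \<longleftrightarrow> (\<forall>\<psi>. test_fun U \<psi> \<longrightarrow>
      (LINT x:U|lebesgue. u x * iter_partial is \<psi> x) = (-1) ^ length is * (LINT x:U|lebesgue. g x * \<psi> x))"

definition H2_derivs :: "(real^'n::finite) set \<Rightarrow> (real^'n \<Rightarrow> real) \<Rightarrow> ('n list \<Rightarrow> real^'n \<Rightarrow> real) \<Rightarrow> bool" where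
  "H2_derivs U u G \<longleftrightarrow> G [] = u \<and> (\<forall>is. length is \<le> 2 \<longrightarrow> L2_on U (G is) \<and> weak_deriv U is u (G is))"

definition H2 :: "(real^'n::finite) set \<Rightarrow> (real^'n \<Rightarrow> real) \<Rightarrow> bool" where
  "H2 U u \<longleftrightarrow> (\<exists>G. H2_derivs U u G)"

definition H2_0 :: "(real^'n::finite) set \<Rightarrow> (real^'n \<Rightarrow> real) \<Rightarrow> bool" where
  "H2_0 U u \<longleftrightarrow> (\<exists>G. H2_derivs U u G \<and>
     (\<exists>\<psi>::nat \<Rightarrow> real^'n \<Rightarrow> real. (\<forall>j. test_fun U (\<psi> j)) \<and>
        (\<forall>is. length is \<le> 2 \<longrightarrow>
           (\<lambda>j. LINT x:U|lebesgue. (iter_partial is (\<psi> j) x - G is x)\<^sup>2) \<longlonglongrightarrow> 0)))"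

definition laplacian :: "(real^'n::finite \<Rightarrow> real) \<Rightarrow> real^'n \<Rightarrow> real" where
  "laplacian f x = (\<Sum>i\<in>UNIV. iter_partial [i, i] f x)"

definition helmholtz_weak :: "(real^'n::finite) set \<Rightarrow> real \<Rightarrow> (real^'n \<Rightarrow> real) \<Rightarrow> (real^'n \<Rightarrow> real) \<Rightarrow> bool" where
  "helmholtz_weak U k u \<phi> \<longleftrightarrow> (\<forall>\<psi>. test_fun U \<psi> \<longrightarrow>
      (LINT x:U|lebesgue. u x * (laplacian \<psi> x + k\<^sup>2 * \<psi> x)) = (LINT x:U|lebesgue. \<phi> x * \<psi> x))"

definition holder_quotients :: "real \<Rightarrow> ('a::metric_space) set \<Rightarrow> ('a \<Rightarrow> real) \<Rightarrow> real set" where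
  "holder_quotients \<alpha> S f = {\<bar>f x - f y\<bar> / (dist x y powr \<alpha>) | x y. x \<in> S \<and> y \<in> S \<and> x \<noteq> y}"

definition holder_space :: "real \<Rightarrow> ('a::metric_space) set \<Rightarrow> ('a \<Rightarrow> real) \<Rightarrow> bool" where
  "holder_space \<alpha> S f \<longleftrightarrow> continuous_on S f \<and> bounded (f ` S) \<and> bdd_above (holder_quotients \<alpha> S f)"

definition holder_norm :: "real \<Rightarrow> ('a::metric_space) set \<Rightarrow> ('a \<Rightarrow> real) \<Rightarrow> real" where
  "holder_norm \<alpha> S f = (SUP x\<in>S. \<bar>f x\<bar>) + Sup (holder_quotients \<alpha> S f)"

end

theory Submission
  imports Defs "HOL-Computational_Algebra.Polynomial" "HOL-Real_Asymp.Real_Asymp"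
begin
primrec Pe :: "nat \<Rightarrow> real poly" where
  "Pe 0 = 1"
| "Pe (Suc m) = [:0,0,1:] * (Pe m - pderiv (Pe m))"

definition Ef :: "nat \<Rightarrow> real \<Rightarrow> real" where
  "Ef m t = (if t > 0 then poly (Pe m) (1/t) * exp (-1/t) else 0)"

lemma poly_exp_lim: "((\<lambda>y. poly q y * exp (- y)) \<longlongrightarrow> (0::real)) at_top"
proof -
  have "((\<lambda>y. \<Sum>i\<le>degree q. coeff q i * (y ^ i / exp y)) \<longlongrightarrow> 0) at_top"
  proof (intro tendsto_null_sum)
    fix i show "((\<lambda>y. coeff q i * (y ^ i / exp y)) \<longlongrightarrow> 0) at_top"
      by (rule tendsto_mult_right_zero[OF tendsto_power_div_exp_0])
  qed
  then show ?thesis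
    by (simp add: poly_altdef exp_minus divide_inverse[symmetric] sum_divide_distrib)
qed

lemma Ef_deriv_pos:
  assumes "t > 0"
  shows "(Ef m has_real_derivative Ef (Suc m) t) (at t)"
proof -
  have d: "((\<lambda>t. poly (Pe m) (1/t) * exp (-1/t)) has_real_derivative
        (poly (pderiv (Pe m)) (1/t) * (- 1 / t^2) * exp (-1/t) + poly (Pe m) (1/t) * (exp (-1/t) * (1/t^2)))) (at t)"
    using assms
    by (auto intro!: derivative_eq_intros DERIV_chain2[OF poly_DERIV] simp: power2_eq_square)
  have e: "poly (pderiv (Pe m)) (1/t) * (- 1 / t^2) * exp (-1/t) + poly (Pe m) (1/t) * (exp (-1/t) * (1/t^2))
      = Ef (Suc m) t"
    using assms by (simp add: Ef_def field_simps power2_eq_square)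
  show ?thesis
  proof (rule has_field_derivative_transform_within_open[where S="{0<..}"])
    show "((\<lambda>t. poly (Pe m) (1/t) * exp (-1/t)) has_real_derivative Ef (Suc m) t) (at t)"
      using d e by simp
  qed (use assms in \<open>auto simp: Ef_def\<close>)
qed

lemma Ef_deriv_neg:
  assumes "t < 0"
  shows "(Ef m has_real_derivative Ef (Suc m) t) (at t)"
proof -
  have "((\<lambda>t. 0) has_real_derivative Ef (Suc m) t) (at t)" using assms by (simp add: Ef_def)
  then show ?thesis
    by (rule has_field_derivative_transform_within_open[where S="{..<0}"]) (use assms in \<open>auto simp: Ef_def\<close>)
qed

lemma Ef_deriv_0: "(Ef m has_real_derivative Ef (Suc m) 0) (at 0)"
proof -
  have r: "((\<lambda>h. Ef m h / h) \<longlongrightarrow> 0) (at_right 0)"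
  proof -
    have "((\<lambda>y. poly ([:0,1:] * Pe m) y * exp (- y)) \<longlongrightarrow> (0::real)) at_top"
      by (rule poly_exp_lim)
    then have "((\<lambda>h. poly ([:0,1:] * Pe m) (inverse h) * exp (- inverse h)) \<longlongrightarrow> (0::real)) (at_right 0)"
      by (rule filterlim_compose[OF _ filterlim_inverse_at_top_right])
    then show ?thesis
      by (rule Lim_transform_eventually)
        (auto simp: eventually_at_right_less Ef_def field_simps intro!: eventually_mono[OF eventually_at_right_less])
  qed
  have "eventually (\<lambda>h. 0 = Ef m h / h) (at_left 0)"
    using eventually_at_left_real[of "-1" 0, OF neg_less_0_iff_less[THEN iffD2, OF zero_less_one]] by eventually_elim (auto simp: Ef_def)
  then have l: "((\<lambda>h. Ef m h / h) \<longlongrightarrow> 0) (at_left 0)"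
    by (rule Lim_transform_eventually[OF tendsto_const])
  have "((\<lambda>h. Ef m h / h) \<longlongrightarrow> 0) (at 0)"
    using l r by (simp add: filterlim_split_at)
  then show ?thesis
    by (simp add: DERIV_def Ef_def)
qed

lemma Ef_deriv: "(Ef m has_real_derivative Ef (Suc m) t) (at t)"
  using Ef_deriv_pos Ef_deriv_neg Ef_deriv_0 by (cases "t > 0"; cases "t < 0") auto

lemma Ef0_bounds: "0 \<le> Ef 0 t" "Ef 0 t \<le> 1"
  by (auto simp: Ef_def)

lemma Ef0_lim: "(Ef 0 \<longlongrightarrow> 1) at_top"
proof -
  have "((\<lambda>t::real. exp (-1/t)) \<longlongrightarrow> 1) at_top"
    by real_asymp
  then show ?thesis
    by (rule Lim_transform_eventually) (auto simp: Ef_def eventually_at_top_dense intro!: exI[of _ 0])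
qed

inductive_set Sm :: "(real^'n::finite \<Rightarrow> real) set" where
  Sc: "(\<lambda>x. a) \<in> Sm"
| Sx: "(\<lambda>x. x $ i) \<in> Sm"
| Sadd: "f \<in> Sm \<Longrightarrow> g \<in> Sm \<Longrightarrow> (\<lambda>x. f x + g x) \<in> Sm"
| Smult: "f \<in> Sm \<Longrightarrow> g \<in> Sm \<Longrightarrow> (\<lambda>x. f x * g x) \<in> Sm"
| Scomp: "(\<And>m t. (F m has_real_derivative F (Suc m) t) (at t)) \<Longrightarrow> f \<in> Sm \<Longrightarrow> (\<lambda>x. F m (f x)) \<in> Sm"

lemma axis_comp: "(x + t *\<^sub>R axis i 1) $ j = x $ j + t * (if j = i then 1 else 0)"
  by (simp add: axis_def)

lemma Sm_line:
  assumes "f \<in> Sm"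
  shows "continuous_on UNIV f \<and> (\<forall>i. \<exists>g\<in>Sm. \<forall>x. ((\<lambda>t. f (x + t *\<^sub>R axis i 1)) has_real_derivative g x) (at 0))"
  using assms
proof induction
  case (Sc a)
  then show ?case by (auto intro!: bexI[of _ "\<lambda>x. 0"] Sm.Sc)
next
  case (Sx j)
  have "continuous_on UNIV (\<lambda>x::real^'a. x $ j)"
    by (intro continuous_intros)
  moreover have "\<exists>g\<in>Sm. \<forall>x. ((\<lambda>t. (x + t *\<^sub>R axis i 1) $ j) has_real_derivative g x) (at 0)" for i
    by (rule bexI[of _ "\<lambda>x. if j = i then 1 else 0"], unfold axis_comp)
       (auto intro!: derivative_eq_intros Sm.Sc)
  ultimately show ?case by blast
next
  case (Sadd f g)
  show ?case
  proof (intro conjI allI)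
    show "continuous_on UNIV (\<lambda>x. f x + g x)" using Sadd by (intro continuous_intros) auto
    fix i
    obtain f' g' where "f' \<in> Sm" "g' \<in> Sm"
      and "\<And>x. ((\<lambda>t. f (x + t *\<^sub>R axis i 1)) has_real_derivative f' x) (at 0)"
      and "\<And>x. ((\<lambda>t. g (x + t *\<^sub>R axis i 1)) has_real_derivative g' x) (at 0)"
      using Sadd by blast
    then show "\<exists>h\<in>Sm. \<forall>x. ((\<lambda>t. f (x + t *\<^sub>R axis i 1) + g (x + t *\<^sub>R axis i 1)) has_real_derivative h x) (at 0)"
      by (intro bexI[of _ "\<lambda>x. f' x + g' x"] allI Sm.Sadd) (auto intro!: derivative_eq_intros)
  qed
next
  case (Smult f g)
  show ?case
  proof (intro conjI allI)
    show "continuous_on UNIV (\<lambda>x. f x * g x)" using Smult by (intro continuous_intros) auto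
    fix i
    obtain f' g' where "f' \<in> Sm" "g' \<in> Sm"
      and d1: "\<And>x. ((\<lambda>t. f (x + t *\<^sub>R axis i 1)) has_real_derivative f' x) (at 0)"
      and d2: "\<And>x. ((\<lambda>t. g (x + t *\<^sub>R axis i 1)) has_real_derivative g' x) (at 0)"
      using Smult by blast
    show "\<exists>h\<in>Sm. \<forall>x. ((\<lambda>t. f (x + t *\<^sub>R axis i 1) * g (x + t *\<^sub>R axis i 1)) has_real_derivative h x) (at 0)"
    proof (intro bexI[of _ "\<lambda>x. f' x * g x + f x * g' x"] allI)
      fix x
      show "((\<lambda>t. f (x + t *\<^sub>R axis i 1) * g (x + t *\<^sub>R axis i 1)) has_real_derivative f' x * g x + f x * g' x) (at 0)"
        using DERIV_mult[OF d1[of x] d2[of x]] by (simp add: mult.commute)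
    qed (intro Sm.Sadd Sm.Smult; fact)+
  qed
next
  case (Scomp F f m)
  have cF: "continuous_on UNIV (F m)"
    using Scomp(1) by (meson DERIV_isCont continuous_at_imp_continuous_on)
  show ?case
  proof (intro conjI allI)
    show "continuous_on UNIV (\<lambda>x. F m (f x))"
      using Scomp cF continuous_on_compose[of UNIV f "F m"] continuous_on_subset[OF cF, of "range f"] by (auto simp: o_def)
    fix i
    obtain f' where "f' \<in> Sm"
      and d1: "\<And>x. ((\<lambda>t. f (x + t *\<^sub>R axis i 1)) has_real_derivative f' x) (at 0)"
      using Scomp by blast
    show "\<exists>h\<in>Sm. \<forall>x. ((\<lambda>t. F m (f (x + t *\<^sub>R axis i 1))) has_real_derivative h x) (at 0)"
    proof (intro bexI[of _ "\<lambda>x. F (Suc m) (f x) * f' x"] allI)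
      fix x
      show "((\<lambda>t. F m (f (x + t *\<^sub>R axis i 1))) has_real_derivative F (Suc m) (f x) * f' x) (at 0)"
        using DERIV_chain2[OF Scomp(1) d1[of x]] by simp
    next
      show "(\<lambda>x. F (Suc m) (f x) * f' x) \<in> Sm"
        by (intro Sm.Smult Sm.Scomp[where F=F, OF Scomp(1)]) fact+
    qed
  qed
qed

lemma Sm_partial:
  assumes "f \<in> Sm"
  shows "partial i f \<in> Sm"
proof -
  obtain g where "g \<in> Sm" and d: "\<And>x. ((\<lambda>t. f (x + t *\<^sub>R axis i 1)) has_real_derivative g x) (at 0)"
    using Sm_line[OF assms] by blast
  have "partial i f = g"
    using d by (auto simp: partial_def fun_eq_iff intro!: DERIV_imp_deriv)
  then show ?thesis using \<open>g \<in> Sm\<close> by simp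
qed

lemma Sm_iter_partial: "f \<in> Sm \<Longrightarrow> iter_partial is f \<in> Sm"
  by (induction "is") (auto simp: iter_partial_def intro: Sm_partial)

lemma Sm_smooth: "f \<in> Sm \<Longrightarrow> smooth_fun f"
  unfolding smooth_fun_def
proof (intro allI conjI)
  fix "is" i x assume "f \<in> Sm"
  then have h: "iter_partial is f \<in> Sm" by (rule Sm_iter_partial)
  show "continuous_on UNIV (iter_partial is f)" using Sm_line[OF h] by blast
  obtain g where "((\<lambda>t. iter_partial is f (x + t *\<^sub>R axis i 1)) has_real_derivative g x) (at 0)"
    using Sm_line[OF h] by blast
  then show "(\<lambda>t. iter_partial is f (x + t *\<^sub>R axis i 1)) differentiable at 0"
    using real_differentiable_def by blast
qed

lemma integrable_cs:
  fixes f :: "'a::euclidean_space \<Rightarrow> real"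
  assumes "continuous_on UNIV f" "compact K" "\<And>x. x \<notin> K \<Longrightarrow> f x = 0"
  shows "integrable lborel f"
proof -
  have "integrable lborel (\<lambda>x. indicator K x *\<^sub>R f x)"
    by (rule borel_integrable_compact) (use assms continuous_on_subset[OF assms(1) subset_UNIV] in auto)
  moreover have "(\<lambda>x. indicator K x *\<^sub>R f x) = f"
    using assms(3) by (auto simp: fun_eq_iff split: split_indicator)
  ultimately show ?thesis by simp
qed

lemma integral_translate:
  fixes h :: "'a::euclidean_space \<Rightarrow> real"
  assumes "h \<in> borel_measurable borel"
  shows "integral\<^sup>L lborel (\<lambda>x. h (x + a)) = integral\<^sup>L lborel h"
    and "integrable lborel (\<lambda>x. h (x + a)) = integrable lborel h"
proof -
  have "integral\<^sup>L (distr lborel borel ((+) a)) h = integral\<^sup>L lborel (\<lambda>x. h (a + x))"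
    by (rule integral_distr) (use assms in auto)
  then show "integral\<^sup>L lborel (\<lambda>x. h (x + a)) = integral\<^sup>L lborel h"
    by (simp add: lborel_distr_plus add.commute)
  have "integrable (distr lborel borel ((+) a)) h = integrable lborel (\<lambda>x. h (a + x))"
    by (rule integrable_distr_eq) (use assms in auto)
  then show "integrable lborel (\<lambda>x. h (x + a)) = integrable lborel h"
    by (simp add: lborel_distr_plus add.commute)
qed

lemma integral_deriv_zero:
  fixes h h' :: "'a::euclidean_space \<Rightarrow> real"
  assumes ch: "continuous_on UNIV h" and ch': "continuous_on UNIV h'"
    and K: "compact K" and hK: "\<And>x. x \<notin> K \<Longrightarrow> h x = 0"
    and e: "norm e = 1"
    and d: "\<And>x. ((\<lambda>t. h (x + t *\<^sub>R e)) has_real_derivative h' x) (at 0)"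
  shows "integral\<^sup>L lborel h' = 0"
proof -
  obtain r where r: "r > 0" "K \<subseteq> cball 0 r"
    using compact_imp_bounded[OF K] unfolding bounded_pos by (auto simp: subset_iff)
  have "compact (cball (0::'a) (r+2))" by simp
  then obtain M where M: "\<And>y. y \<in> cball 0 (r+2) \<Longrightarrow> norm (h' y) \<le> M"
    using compact_imp_bounded[OF compact_continuous_image[OF continuous_on_subset[OF ch' subset_UNIV]]]
    by (meson bounded_iff image_eqI)
  define s where "s n x = (h (x + inverse (real (Suc n)) *\<^sub>R e) - h x) * real (Suc n)" for n x
  have hb: "h \<in> borel_measurable borel" using ch by (rule borel_measurable_continuous_onI)
  have ih: "integrable lborel h" by (rule integrable_cs[OF ch K hK])
  have ihs: "integrable lborel (\<lambda>x. h (x + a))" for a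
    using integral_translate(2)[OF hb] ih by simp
  have int0: "integral\<^sup>L lborel (s n) = 0" for n
  proof -
    have "integral\<^sup>L lborel (s n) = (integral\<^sup>L lborel (\<lambda>x. h (x + inverse (real (Suc n)) *\<^sub>R e)) - integral\<^sup>L lborel h) * real (Suc n)"
      unfolding s_def using ihs ih by simp
    then show ?thesis using integral_translate(1)[OF hb] by simp
  qed
  have lim: "(\<lambda>n. s n x) \<longlonglongrightarrow> h' x" for x
  proof -
    have "((\<lambda>t. (h (x + t *\<^sub>R e) - h x) / t) \<longlongrightarrow> h' x) (at 0)"
      using d[of x] by (simp add: DERIV_def)
    moreover have "filterlim (\<lambda>n. inverse (real (Suc n))) (at 0) sequentially"
      using LIMSEQ_inverse_real_of_nat by (auto simp: filterlim_at)
    ultimately have "(\<lambda>n. (h (x + inverse (real (Suc n)) *\<^sub>R e) - h x) / inverse (real (Suc n))) \<longlonglongrightarrow> h' x"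
      by (rule filterlim_compose)
    then show ?thesis by (simp add: s_def divide_inverse)
  qed
  have bound: "norm (s n x) \<le> M * indicator (cball 0 (r+1)) x" for n x
  proof (cases "x \<in> cball 0 (r+1)")
    case False
    have "norm (inverse (real (Suc n)) *\<^sub>R e) \<le> 1" using e by (simp add: field_simps)
    then have "x + inverse (real (Suc n)) *\<^sub>R e \<notin> K" "x \<notin> K"
      using False r(2) norm_triangle_ineq2[of x "- inverse (real (Suc n)) *\<^sub>R e"] 
      by (auto simp: subset_iff dist_norm)
    then show ?thesis using False hK by (simp add: s_def)
  next
    case True
    define a where "a = inverse (real (Suc n))"
    have a: "0 < a" "a \<le> 1" by (auto simp: a_def field_simps)
    have "\<exists>z. 0 < z \<and> z < a \<and> (h (x + a *\<^sub>R e) - h (x + 0 *\<^sub>R e) = (a - 0) * h' (x + z *\<^sub>R e))"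
    proof (rule MVT2[OF a(1)])
      fix t assume "0 \<le> t" "t \<le> a"
      have "((\<lambda>s. h ((x + t *\<^sub>R e) + s *\<^sub>R e)) has_real_derivative h' (x + t *\<^sub>R e)) (at 0)"
        by (rule d)
      then have "((\<lambda>s. h (x + (s + t) *\<^sub>R e)) has_real_derivative h' (x + t *\<^sub>R e)) (at 0)"
        by (simp add: scaleR_add_left ac_simps)
      then show "((\<lambda>t. h (x + t *\<^sub>R e)) has_real_derivative h' (x + t *\<^sub>R e)) (at t)"
        using DERIV_shift[of "\<lambda>t. h (x + t *\<^sub>R e)" _ 0 t] by simp
    qed
    then obtain z where z: "0 < z" "z < a" "h (x + a *\<^sub>R e) - h x = a * h' (x + z *\<^sub>R e)"
      by auto
    have "x + z *\<^sub>R e \<in> cball 0 (r+2)"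
      using True z a e norm_triangle_ineq[of x "z *\<^sub>R e"] norm_minus_cancel[of "x + z *\<^sub>R e"]
      by (auto simp: dist_norm)
    then have "norm (h' (x + z *\<^sub>R e)) \<le> M" by (rule M)
    moreover have "s n x = h' (x + z *\<^sub>R e)"
      using z(3) by (simp add: s_def a_def[symmetric]) (simp add: a_def)
    ultimately show ?thesis using True by simp
  qed
  have "(\<lambda>n. integral\<^sup>L lborel (s n)) \<longlonglongrightarrow> integral\<^sup>L lborel h'"
  proof (rule integral_dominated_convergence[where w="\<lambda>x::'a. M * indicator (cball 0 (r+1)) x"])
    show "h' \<in> borel_measurable lborel" using ch' by (simp add: borel_measurable_continuous_onI)
    show "s n \<in> borel_measurable lborel" for n unfolding s_def using hb by measurable
    show "integrable lborel (\<lambda>x::'a. M * indicator (cball 0 (r+1)) x)"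
    proof (intro integrable_mult_right integrable_real_indicator)
      show "emeasure lborel (cball (0::'a) (r+1)) < \<infinity>" by (rule emeasure_bounded_finite) simp
    qed simp
  qed (use lim bound in auto)
  then have "(\<lambda>n. 0) \<longlonglongrightarrow> integral\<^sup>L lborel h'" using int0 by simp
  then show ?thesis by (metis LIMSEQ_unique tendsto_const)
qed

lemma deriv_zero_outside:
  fixes f :: "'a::euclidean_space \<Rightarrow> real"
  assumes K: "compact K" and fK: "\<And>y. y \<notin> K \<Longrightarrow> f y = 0"
    and d: "((\<lambda>t. f (x + t *\<^sub>R e)) has_real_derivative D) (at 0)" and x: "x \<notin> K"
  shows "D = 0"
proof -
  have "open (- K)" using K by (simp add: compact_imp_closed open_Compl)
  then obtain \<epsilon> where \<epsilon>: "\<epsilon> > 0" "ball x \<epsilon> \<subseteq> - K" using x by (meson ComplI open_contains_ball)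
  define S where "S = (\<lambda>t::real. x + t *\<^sub>R e) -` ball x \<epsilon>"
  have oS: "open S" unfolding S_def
    by (rule open_vimage) (auto intro!: continuous_intros)
  have "((\<lambda>t. 0) has_real_derivative 0) (at 0)" by simp
  then have "((\<lambda>t. f (x + t *\<^sub>R e)) has_real_derivative 0) (at 0)"
    by (rule has_field_derivative_transform_within_open[where S=S])
       (use oS \<epsilon> fK in \<open>auto simp: S_def\<close>)
  then show ?thesis using d DERIV_unique by blast
qed

lemma ibp:
  fixes f g f' g' :: "'a::euclidean_space \<Rightarrow> real"
  assumes cf: "continuous_on UNIV f" and cg: "continuous_on UNIV g"
    and cf': "continuous_on UNIV f'" and cg': "continuous_on UNIV g'"
    and K: "compact K" and fK: "\<And>x. x \<notin> K \<Longrightarrow> f x = 0"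
    and e: "norm e = 1"
    and df: "\<And>x. ((\<lambda>t. f (x + t *\<^sub>R e)) has_real_derivative f' x) (at 0)"
    and dg: "\<And>x. ((\<lambda>t. g (x + t *\<^sub>R e)) has_real_derivative g' x) (at 0)"
  shows "integral\<^sup>L lborel (\<lambda>x. f' x * g x) = - integral\<^sup>L lborel (\<lambda>x. f x * g' x)"
proof -
  have f'K: "f' x = 0" if "x \<notin> K" for x
    by (rule deriv_zero_outside[OF K fK df that])
  have i1: "integrable lborel (\<lambda>x. f' x * g x)"
    by (rule integrable_cs[OF _ K]) (use cf' cg f'K in \<open>auto intro!: continuous_intros\<close>)
  have i2: "integrable lborel (\<lambda>x. f x * g' x)"
    by (rule integrable_cs[OF _ K]) (use cf cg' fK in \<open>auto intro!: continuous_intros\<close>)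
  have "integral\<^sup>L lborel (\<lambda>x. f' x * g x + f x * g' x) = 0"
  proof (rule integral_deriv_zero[OF _ _ K _ e])
    show "continuous_on UNIV (\<lambda>x. f x * g x)" using cf cg by (intro continuous_intros)
    show "continuous_on UNIV (\<lambda>x. f' x * g x + f x * g' x)" using cf cg cf' cg' by (intro continuous_intros)
    show "f x * g x = 0" if "x \<notin> K" for x using fK that by simp
    fix x
    show "((\<lambda>t. f (x + t *\<^sub>R e) * g (x + t *\<^sub>R e)) has_real_derivative f' x * g x + f x * g' x) (at 0)"
      using DERIV_mult[OF df[of x] dg[of x]] by (simp add: mult.commute)
  qed
  then show ?thesis using i1 i2 by simp
qed

lemma set_integral_ball_eq:
  fixes F :: "'a::euclidean_space \<Rightarrow> real"
  assumes "F \<in> borel_measurable borel" "\<And>x. x \<notin> B \<Longrightarrow> F x = 0"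
  shows "(LINT x:B|lebesgue. F x) = integral\<^sup>L lborel F"
proof -
  have "(\<lambda>x. indicator B x *\<^sub>R F x) = F"
    using assms(2) by (auto simp: fun_eq_iff split: split_indicator)
  then have "(LINT x:B|lebesgue. F x) = integral\<^sup>L lebesgue F"
    by (simp add: set_lebesgue_integral_def)
  also have "\<dots> = integral\<^sup>L lborel F"
    by (rule integral_completion) (use assms in simp)
  finally show ?thesis .
qed

lemma iter_partial_zero_outside:
  fixes \<psi> :: "real^'n::finite \<Rightarrow> real"
  assumes sm: "smooth_fun \<psi>" and K: "compact K" and z: "\<And>x. x \<notin> K \<Longrightarrow> \<psi> x = 0"
  shows "x \<notin> K \<Longrightarrow> iter_partial is \<psi> x = 0"
proof (induction "is" arbitrary: x)
  case Nil
  then show ?case using z by (simp add: iter_partial_def)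
next
  case (Cons i "is")
  have "(\<lambda>t. iter_partial is \<psi> (x + t *\<^sub>R axis i 1)) differentiable (at 0)"
    using sm by (auto simp: smooth_fun_def)
  then have "((\<lambda>t. iter_partial is \<psi> (x + t *\<^sub>R axis i 1)) has_real_derivative
      deriv (\<lambda>t. iter_partial is \<psi> (x + t *\<^sub>R axis i 1)) 0) (at 0)"
    by (simp add: DERIV_deriv_iff_real_differentiable)
  then have "deriv (\<lambda>t. iter_partial is \<psi> (x + t *\<^sub>R axis i 1)) 0 = 0"
  proof -
    have fK: "\<And>y. y \<notin> K \<Longrightarrow> iter_partial is \<psi> y = 0" by (rule Cons.IH)
    from deriv_zero_outside[OF K fK \<open>(_ has_real_derivative _) _\<close> Cons.prems] show ?thesis .
  qed
  then show ?case by (simp add: iter_partial_def partial_def)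
qed

lemma smooth_line_deriv:
  assumes "smooth_fun \<psi>"
  shows "((\<lambda>t. iter_partial is \<psi> (x + t *\<^sub>R axis i 1)) has_real_derivative iter_partial (i # is) \<psi> x) (at 0)"
proof -
  have "(\<lambda>t. iter_partial is \<psi> (x + t *\<^sub>R axis i 1)) differentiable (at 0)"
    using assms by (auto simp: smooth_fun_def)
  then show ?thesis
    by (simp add: DERIV_deriv_iff_real_differentiable iter_partial_def partial_def)
qed

lemma test_fun_support:
  assumes "test_fun U \<psi>"
  shows "compact (closure {x. \<psi> x \<noteq> 0})" "\<And>x. x \<notin> closure {x. \<psi> x \<noteq> 0} \<Longrightarrow> \<psi> x = 0"
    "smooth_fun \<psi>" "closure {x. \<psi> x \<noteq> 0} \<subseteq> U"
  using assms closure_subset[of "{x. \<psi> x \<noteq> 0}"] by (auto simp: test_fun_def)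

lemma smooth_cont: "smooth_fun \<psi> \<Longrightarrow> continuous_on UNIV (iter_partial is \<psi>)"
  by (simp add: smooth_fun_def)

lemma psi_orth:
  fixes \<psi> :: "real^'n::finite \<Rightarrow> real" and c :: "real^'n"
  assumes tf: "test_fun U \<psi>"
  shows "integral\<^sup>L lborel (\<lambda>x. ((\<Sum>i\<in>UNIV. iter_partial [i,i] \<psi> x) + k\<^sup>2 * \<psi> x) * cos (k * (x$j - c$j))) = 0"
proof -
  define S where "S = closure {x. \<psi> x \<noteq> 0}"
  note ts = test_fun_support[OF tf, folded S_def]
  have Z: "\<And>x. x \<notin> S \<Longrightarrow> iter_partial is \<psi> x = 0" for "is"
    by (rule iter_partial_zero_outside[OF ts(3) ts(1) ts(2)])
  have C: "continuous_on UNIV (iter_partial is \<psi>)" for "is" by (rule smooth_cont[OF ts(3)])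
  define v where "v x = cos (k * (x$j - c$j))" for x :: "real^'n"
  define v' where "v' i x = (if j = i then - k * sin (k * (x$j - c$j)) else 0)" for i and x :: "real^'n"
  define v'' where "v'' i x = (if j = i then - k\<^sup>2 * cos (k * (x$j - c$j)) else 0)" for i and x :: "real^'n"
  have cv: "continuous_on UNIV v" "continuous_on UNIV (v' i)" "continuous_on UNIV (v'' i)" for i
    unfolding v_def v'_def v''_def by (cases "j = i"; auto intro!: continuous_intros)+
  have dv: "((\<lambda>t. v (x + t *\<^sub>R axis i 1)) has_real_derivative v' i x) (at 0)" for i x
    unfolding v_def v'_def axis_comp by (auto intro!: derivative_eq_intros)
  have dv': "((\<lambda>t. v' i (x + t *\<^sub>R axis i 1)) has_real_derivative v'' i x) (at 0)" for i x
    unfolding v'_def v''_def axis_comp by (auto intro!: derivative_eq_intros simp: power2_eq_square)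
  have ip: "\<And>x. iter_partial [] \<psi> x = \<psi> x" by (simp add: iter_partial_def)
  have key: "integral\<^sup>L lborel (\<lambda>x. iter_partial [i,i] \<psi> x * v x) = integral\<^sup>L lborel (\<lambda>x. \<psi> x * v'' i x)" for i
  proof -
    have "integral\<^sup>L lborel (\<lambda>x. iter_partial [i,i] \<psi> x * v x) = - integral\<^sup>L lborel (\<lambda>x. iter_partial [i] \<psi> x * v' i x)"
      by (rule ibp[OF C cv(1) C cv(2) ts(1) Z norm_axis_1 smooth_line_deriv[OF ts(3)] dv])
    also have "integral\<^sup>L lborel (\<lambda>x. iter_partial [i] \<psi> x * v' i x) = - integral\<^sup>L lborel (\<lambda>x. iter_partial [] \<psi> x * v'' i x)"
      by (rule ibp[OF C cv(2) C cv(3) ts(1) Z norm_axis_1 smooth_line_deriv[OF ts(3)] dv'])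
    finally show ?thesis by (simp add: ip)
  qed
  have sumv: "(\<Sum>i\<in>UNIV. v'' i x) = - k\<^sup>2 * v x" for x
    by (simp add: v''_def v_def)
  have eq: "((\<Sum>i\<in>UNIV. iter_partial [i,i] \<psi> x) + k\<^sup>2 * \<psi> x) * v x
      = (\<Sum>i\<in>UNIV. iter_partial [i,i] \<psi> x * v x - \<psi> x * v'' i x)" for x
    by (simp add: sum_subtractf sum_distrib_right sum_distrib_left[symmetric] sumv algebra_simps)
  have int1: "integrable lborel (\<lambda>x. iter_partial [i,i] \<psi> x * v x)" for i
    by (rule integrable_cs[OF _ ts(1)]) (use C cv Z in \<open>auto intro!: continuous_intros\<close>)
  have int2: "integrable lborel (\<lambda>x. \<psi> x * v'' i x)" for i
    by (rule integrable_cs[OF _ ts(1)]) (use C[of "[]"] cv ts(2) in \<open>auto intro!: continuous_intros simp: ip[abs_def]\<close>)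
  have "integral\<^sup>L lborel (\<lambda>x. ((\<Sum>i\<in>UNIV. iter_partial [i,i] \<psi> x) + k\<^sup>2 * \<psi> x) * v x)
      = integral\<^sup>L lborel (\<lambda>x. \<Sum>i\<in>UNIV. iter_partial [i,i] \<psi> x * v x - \<psi> x * v'' i x)"
    by (simp add: eq)
  also have "\<dots> = (\<Sum>i\<in>UNIV. integral\<^sup>L lborel (\<lambda>x. iter_partial [i,i] \<psi> x * v x - \<psi> x * v'' i x))"
    using int1 int2 by simp
  also have "\<dots> = 0"
    using int1 int2 key by simp
  finally show ?thesis by (simp add: v_def)
qed

lemma ball_fin: "emeasure lebesgue (ball (c::'a::euclidean_space) R) < \<infinity>"
  using emeasure_bounded_finite[of "ball c R"] by simp

lemma cont_bounded_cball:
  fixes h :: "'a::euclidean_space \<Rightarrow> real"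
  assumes "continuous_on (cball c R) h"
  obtains M where "M \<ge> 0" "\<And>x. x \<in> cball c R \<Longrightarrow> \<bar>h x\<bar> \<le> M"
proof -
  have "bounded (h ` cball c R)"
    by (rule compact_imp_bounded[OF compact_continuous_image[OF assms]]) simp
  then obtain M where "M > 0" "\<And>x. x \<in> cball c R \<Longrightarrow> \<bar>h x\<bar> \<le> M"
    unfolding bounded_pos by auto
  then show ?thesis using that[of M] by auto
qed

lemma abs_le_1_sq: "\<bar>a::real\<bar> \<le> 1 + a\<^sup>2"
proof (cases "\<bar>a\<bar> \<le> 1")
  case True then show ?thesis using zero_le_power2[of a] by linarith
next
  case False
  then have "\<bar>a\<bar> * 1 \<le> \<bar>a\<bar> * \<bar>a\<bar>" by (intro mult_left_mono) auto
  then show ?thesis by (simp add: power2_eq_square)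
qed

lemma L2_mult_cont:
  fixes f h :: "real^'n::finite \<Rightarrow> real"
  assumes f: "L2_on (ball c R) f" and h: "continuous_on UNIV h"
  shows "set_integrable lebesgue (ball c R) (\<lambda>x. f x * h x)"
proof -
  obtain M where M: "M \<ge> 0" "\<And>x. x \<in> cball c R \<Longrightarrow> \<bar>h x\<bar> \<le> M"
    using cont_bounded_cball[OF continuous_on_subset[OF h subset_UNIV]] by blast
  have mf: "(\<lambda>x. indicator (ball c R) x * f x) \<in> borel_measurable lebesgue"
    using f by (simp add: L2_on_def set_borel_measurable_def)
  have mh: "h \<in> borel_measurable lebesgue"
    by (rule measurable_completion) (simp add: borel_measurable_continuous_onI[OF h])
  have i2: "integrable lebesgue (\<lambda>x. indicator (ball c R) x * (f x)\<^sup>2)"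
    using f by (simp add: L2_on_def set_integrable_def)
  have i1: "integrable lebesgue (\<lambda>x. indicator (ball c R) x :: real)"
    using ball_fin[of c R] by (intro integrable_real_indicator) auto
  show ?thesis unfolding set_integrable_def
  proof (rule Bochner_Integration.integrable_bound)
    show "integrable lebesgue (\<lambda>x. M * (indicator (ball c R) x + indicator (ball c R) x * (f x)\<^sup>2))"
      by (rule Bochner_Integration.integrable_mult_right, rule Bochner_Integration.integrable_add[OF i1 i2])
    have "(\<lambda>x. (indicator (ball c R) x * f x) * h x) \<in> borel_measurable lebesgue"
      using mf mh by measurable
    then show "(\<lambda>x. indicator (ball c R) x *\<^sub>R (f x * h x)) \<in> borel_measurable lebesgue"
      by (simp add: mult.assoc)
    show "AE x in lebesgue. norm (indicator (ball c R) x *\<^sub>R (f x * h x))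
        \<le> norm (M * (indicator (ball c R) x + indicator (ball c R) x * (f x)\<^sup>2))"
    proof (intro AE_I2)
      fix x
      show "norm (indicator (ball c R) x *\<^sub>R (f x * h x))
        \<le> norm (M * (indicator (ball c R) x + indicator (ball c R) x * (f x)\<^sup>2))"
      proof (cases "x \<in> ball c R")
        case True
        then have "\<bar>h x\<bar> \<le> M" using M by auto
        moreover have "\<bar>f x\<bar> \<le> 1 + (f x)\<^sup>2"
          by (rule abs_le_1_sq)
        ultimately have "\<bar>f x\<bar> * \<bar>h x\<bar> \<le> (1 + (f x)\<^sup>2) * M"
          by (intro mult_mono) auto
        then show ?thesis using True M by (simp add: abs_mult algebra_simps)
      qed simp
    qed
  qed
qed

lemma L2_const: "L2_on (ball c R) f \<Longrightarrow> set_integrable lebesgue (ball c R) f"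
  using L2_mult_cont[of c R f "\<lambda>x. 1"] by simp

lemma conv0:
  fixes g :: "nat \<Rightarrow> 'a::euclidean_space \<Rightarrow> real" and h :: "'a \<Rightarrow> real"
  assumes mg: "\<And>j. set_borel_measurable lebesgue B (g j)"
    and ig: "\<And>j. set_integrable lebesgue B (\<lambda>x. (g j x)\<^sup>2)"
    and mh: "h \<in> borel_measurable lebesgue" and hb: "\<And>x. \<bar>h x\<bar> \<le> 1"
    and fin: "emeasure lebesgue B < \<infinity>" and B: "B \<in> sets lebesgue"
    and lim: "(\<lambda>j. LINT x:B|lebesgue. (g j x)\<^sup>2) \<longlonglongrightarrow> 0"
  shows "(\<lambda>j. LINT x:B|lebesgue. g j x * h x) \<longlonglongrightarrow> 0"
proof -
  define m where "m = measure lebesgue B"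
  have m0: "m \<ge> 0" by (simp add: m_def)
  have iB: "integrable lebesgue (\<lambda>x. indicator B x :: real)"
    using fin B by (intro integrable_real_indicator) auto
  have iB2: "integrable lebesgue (\<lambda>x. indicator B x * (g j x)\<^sup>2)" for j
    using ig[of j] by (simp add: set_integrable_def)
  have mgh: "(\<lambda>x. indicator B x * (g j x * h x)) \<in> borel_measurable lebesgue" for j
  proof -
    have "(\<lambda>x. (indicator B x * g j x) * h x) \<in> borel_measurable lebesgue"
      using mg[of j] mh by (simp add: set_borel_measurable_def)
    then show ?thesis by (simp add: mult.assoc)
  qed
  have pt: "\<bar>a\<bar> \<le> d / 2 + a\<^sup>2 / (2 * d)" if "d > 0" for a d :: real
  proof -
    have "0 \<le> (\<bar>a\<bar> - d)\<^sup>2" by simp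
    then have "2 * d * \<bar>a\<bar> \<le> d\<^sup>2 + a\<^sup>2" by (simp add: power2_eq_square algebra_simps)
    then show ?thesis using that by (simp add: field_simps power2_eq_square)
  qed
  have bnd: "\<bar>LINT x:B|lebesgue. g j x * h x\<bar> \<le> d / 2 * m + (LINT x:B|lebesgue. (g j x)\<^sup>2) / (2 * d)"
    if d: "d > 0" for j d
  proof -
    have ib: "integrable lebesgue (\<lambda>x. d / 2 * indicator B x + indicator B x * (g j x)\<^sup>2 / (2 * d))"
      using iB iB2[of j] by (intro Bochner_Integration.integrable_add Bochner_Integration.integrable_mult_left
          Bochner_Integration.integrable_divide Bochner_Integration.integrable_mult_right)
    have le: "\<bar>indicator B x * (g j x * h x)\<bar> \<le> d / 2 * indicator B x + indicator B x * (g j x)\<^sup>2 / (2 * d)" for x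
    proof (cases "x \<in> B")
      case True
      have "\<bar>g j x * h x\<bar> \<le> \<bar>g j x\<bar>" using hb[of x] by (simp add: abs_mult mult_left_le)
      then show ?thesis using True pt[OF d, of "g j x"] by simp
    qed simp
    have ii: "integrable lebesgue (\<lambda>x. indicator B x * (g j x * h x))"
      by (rule Bochner_Integration.integrable_bound[OF ib mgh]) (use le d in \<open>auto intro!: AE_I2\<close>)
    have "\<bar>LINT x:B|lebesgue. g j x * h x\<bar> = \<bar>integral\<^sup>L lebesgue (\<lambda>x. indicator B x * (g j x * h x))\<bar>"
      by (simp add: set_lebesgue_integral_def)
    also have "\<dots> \<le> integral\<^sup>L lebesgue (\<lambda>x. \<bar>indicator B x * (g j x * h x)\<bar>)"
      using integral_abs_bound by blast
    also have "\<dots> \<le> integral\<^sup>L lebesgue (\<lambda>x. d / 2 * indicator B x + indicator B x * (g j x)\<^sup>2 / (2 * d))"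
      by (rule integral_mono[OF _ ib le]) (use ii in auto)
    also have "\<dots> = d / 2 * m + (LINT x:B|lebesgue. (g j x)\<^sup>2) / (2 * d)"
      using iB iB2[of j] fin B by (simp add: set_lebesgue_integral_def m_def measure_def)
    finally show ?thesis .
  qed
  show ?thesis
  proof (rule LIMSEQ_I)
    fix r :: real assume r: "r > 0"
    define d where "d = r / (m + 1)"
    have d: "d > 0" using r m0 by (simp add: d_def)
    have dm: "d / 2 * m < r / 2"
      using r m0 by (simp add: d_def field_simps)
    obtain N where N: "\<And>n. n \<ge> N \<Longrightarrow> norm ((LINT x:B|lebesgue. (g n x)\<^sup>2) - 0) < r * d"
      using LIMSEQ_D[OF lim, of "r * d"] r d by auto
    show "\<exists>no. \<forall>n\<ge>no. norm ((LINT x:B|lebesgue. g n x * h x) - 0) < r"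
    proof (intro exI allI impI)
      fix n assume "n \<ge> N"
      then have "\<bar>LINT x:B|lebesgue. (g n x)\<^sup>2\<bar> < r * d" using N by simp
      then have "(LINT x:B|lebesgue. (g n x)\<^sup>2) / (2 * d) < r / 2"
        using d by (simp add: field_simps)
      then show "norm ((LINT x:B|lebesgue. g n x * h x) - 0) < r"
        using bnd[OF d, of n] dm by simp
    qed
  qed
qed

lemma Sm_sum: "finite I \<Longrightarrow> (\<And>i. i \<in> I \<Longrightarrow> f i \<in> Sm) \<Longrightarrow> (\<lambda>x. \<Sum>i\<in>I. f i x) \<in> Sm"
proof (induction I rule: finite_induct)
  case empty then show ?case using Sm.Sc[of 0] by simp
next
  case (insert a I) then show ?case by (simp add: Sm.Sadd)
qed

lemma Sm_diff: "f \<in> Sm \<Longrightarrow> g \<in> Sm \<Longrightarrow> (\<lambda>x. f x - g x) \<in> Sm"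
proof -
  assume f: "f \<in> Sm" and g: "g \<in> Sm"
  have "(\<lambda>x. (-1) * g x) \<in> Sm" by (rule Sm.Smult[OF Sm.Sc g])
  from Sm.Sadd[OF f this] show ?thesis by simp
qed

definition cosF :: "nat \<Rightarrow> real \<Rightarrow> real" where "cosF m t = cos (t + real m * (pi / 2))"

lemma cosF_deriv: "(cosF m has_real_derivative cosF (Suc m) t) (at t)"
proof -
  have e: "t + real (Suc m) * (pi / 2) = (t + real m * (pi / 2)) + pi / 2" by (simp add: algebra_simps)
  show ?thesis unfolding cosF_def e cos_add
    by (auto intro!: derivative_eq_intros simp: sin_add)
qed

lemma v_Sm: "(\<lambda>x::real^'n::finite. cos (k * (x$j - c$j))) \<in> Sm"
proof -
  have "(\<lambda>x::real^'n. cosF 0 (k * (x$j - c$j))) \<in> Sm"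
    by (intro Sm.Scomp[where F=cosF, OF cosF_deriv] Sm.Smult Sm_diff Sm.Sc Sm.Sx)
  then show ?thesis by (simp add: cosF_def)
qed

lemma sumsq_dist: "(\<Sum>i\<in>UNIV. (x$i - c$i)\<^sup>2) = (dist x (c::real^'n::finite))\<^sup>2"
proof -
  have "(dist x c)\<^sup>2 = inner (x - c) (x - c)" by (simp only: dist_norm power2_norm_eq_inner)
  then show ?thesis by (simp add: inner_vec_def power2_eq_square)
qed

definition chi :: "real^'n::finite \<Rightarrow> real \<Rightarrow> nat \<Rightarrow> real^'n \<Rightarrow> real" where
  "chi c R m x = Ef 0 (real (Suc m) * ((R * (1 - 1 / (real m + 2)))\<^sup>2 - (dist x c)\<^sup>2))"

lemma chi_Sm: "chi c R m \<in> Sm"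
proof -
  have "(\<lambda>x. Ef 0 (real (Suc m) * ((R * (1 - 1 / (real m + 2)))\<^sup>2 - (\<Sum>i\<in>UNIV. (x$i - c$i) * (x$i - c$i))))) \<in> Sm"
    by (intro Sm.Scomp[where F=Ef, OF Ef_deriv] Sm.Smult Sm_diff Sm.Sc Sm_sum Sm.Sx) auto
  moreover have eq: "\<And>x. (\<Sum>i\<in>UNIV. (x$i - c$i) * (x$i - c$i)) = (dist x c)\<^sup>2"
    using sumsq_dist by (simp add: power2_eq_square)
  ultimately show ?thesis unfolding chi_def[abs_def] by (simp only: eq)
qed

lemma chi_bounds: "0 \<le> chi c R m x" "chi c R m x \<le> 1"
  by (auto simp: chi_def Ef0_bounds)

lemma chi_support:
  assumes "R > 0"
  shows "{x. chi c R m x \<noteq> 0} \<subseteq> cball c (R * (1 - 1 / (real m + 2)))"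
proof
  fix x assume "x \<in> {x. chi c R m x \<noteq> 0}"
  then have "(dist x c)\<^sup>2 < (R * (1 - 1 / (real m + 2)))\<^sup>2"
    by (auto simp: chi_def Ef_def zero_less_mult_iff split: if_splits)
  moreover have "R * (1 - 1 / (real m + 2)) \<ge> 0" using assms by (auto simp: field_simps)
  ultimately show "x \<in> cball c (R * (1 - 1 / (real m + 2)))"
    by (auto simp: dist_commute intro: power2_less_imp_less less_imp_le)
qed

lemma theta_test:
  assumes R: "R > 0"
  shows "test_fun (ball c R) (\<lambda>x. chi c R m x * cos (k * (x$j - c$j)))"
proof -
  define r where "r = R * (1 - 1 / (real m + 2))"
  have r: "r < R" using R by (simp add: r_def field_simps)
  have sub: "{x. chi c R m x * cos (k * (x$j - c$j)) \<noteq> 0} \<subseteq> cball c r"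
    using chi_support[OF R, of c m] by (auto simp: r_def)
  have cl: "closure {x. chi c R m x * cos (k * (x$j - c$j)) \<noteq> 0} \<subseteq> cball c r"
    using closure_minimal[OF sub] by simp
  show ?thesis unfolding test_fun_def
  proof (intro conjI)
    show "smooth_fun (\<lambda>x. chi c R m x * cos (k * (x $ j - c $ j)))"
      by (intro Sm_smooth Sm.Smult chi_Sm v_Sm)
    show "compact (closure {x. chi c R m x * cos (k * (x $ j - c $ j)) \<noteq> 0})"
      using sub bounded_cball bounded_subset compact_closure by blast
    show "closure {x. chi c R m x * cos (k * (x $ j - c $ j)) \<noteq> 0} \<subseteq> ball c R"
      using cl r by (auto simp: subset_iff)
  qed
qed

lemma chi_lim:
  assumes "x \<in> ball c R"
  shows "(\<lambda>m. chi c R m x) \<longlonglongrightarrow> 1"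
proof -
  have "dist x c < R" using assms by (simp add: dist_commute)
  then have d: "(dist x c)\<^sup>2 < R\<^sup>2"
    by (intro power_strict_mono) auto
  have "(\<lambda>m. 1 / (real m + 2)) \<longlonglongrightarrow> 0" by real_asymp
  then have "(\<lambda>m. (R * (1 - 1 / (real m + 2)))\<^sup>2 - (dist x c)\<^sup>2) \<longlonglongrightarrow> (R * (1 - 0))\<^sup>2 - (dist x c)\<^sup>2"
    by (intro tendsto_intros)
  then have l1: "(\<lambda>m. (R * (1 - 1 / (real m + 2)))\<^sup>2 - (dist x c)\<^sup>2) \<longlonglongrightarrow> R\<^sup>2 - (dist x c)\<^sup>2" by simp
  have "filterlim (\<lambda>m. ((R * (1 - 1 / (real m + 2)))\<^sup>2 - (dist x c)\<^sup>2) * real (Suc m)) at_top sequentially"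
    by (rule filterlim_tendsto_pos_mult_at_top[OF l1]) (use d in simp, real_asymp)
  from filterlim_compose[OF Ef0_lim this] show ?thesis
    by (simp add: chi_def mult.commute)
qed

lemma set_int_sum:
  fixes f :: "'i \<Rightarrow> 'a \<Rightarrow> real"
  assumes "finite I" "\<And>i. i \<in> I \<Longrightarrow> set_integrable M A (f i)"
  shows "set_integrable M A (\<lambda>x. \<Sum>i\<in>I. f i x) \<and> (LINT x:A|M. \<Sum>i\<in>I. f i x) = (\<Sum>i\<in>I. LINT x:A|M. f i x)"
  using assms
proof (induction I rule: finite_induct)
  case empty then show ?case by (simp add: set_integrable_def set_lebesgue_integral_def)
next
  case (insert a I)
  then have ia: "set_integrable M A (f a)" and iI: "set_integrable M A (\<lambda>x. \<Sum>i\<in>I. f i x)"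
    and eI: "(LINT x:A|M. \<Sum>i\<in>I. f i x) = (\<Sum>i\<in>I. LINT x:A|M. f i x)" by auto
  show ?case using insert(1,2) set_integral_add[OF ia iI] eI by simp
qed

lemma cont_set_int:
  fixes g :: "real^'n::finite \<Rightarrow> real"
  assumes g: "continuous_on UNIV g"
  shows "set_integrable lebesgue (ball c R) g"
  using L2_mult_cont[of c R "\<lambda>x. 1" g] g
proof -
  obtain M where M: "M \<ge> 0" "\<And>x. x \<in> cball c R \<Longrightarrow> \<bar>g x\<bar> \<le> M"
    using cont_bounded_cball[OF continuous_on_subset[OF g subset_UNIV]] by blast
  have mg: "g \<in> borel_measurable lebesgue"
    by (rule measurable_completion) (simp add: borel_measurable_continuous_onI[OF g])
  have i1: "integrable lebesgue (\<lambda>x. indicator (ball c R) x :: real)"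
    using ball_fin[of c R] by (intro integrable_real_indicator) auto
  show ?thesis unfolding set_integrable_def
  proof (rule Bochner_Integration.integrable_bound)
    show "integrable lebesgue (\<lambda>x. M * indicator (ball c R) x)"
      by (rule Bochner_Integration.integrable_mult_right[OF i1])
    show "(\<lambda>x. indicator (ball c R) x *\<^sub>R g x) \<in> borel_measurable lebesgue"
    proof (rule measurable_completion)
      have "(\<lambda>x. indicator (ball c R) x *\<^sub>R g x) \<in> borel_measurable borel"
        by (rule borel_measurable_continuous_on_indicator) (auto intro: continuous_on_subset[OF g])
      then show "(\<lambda>x. indicator (ball c R) x *\<^sub>R g x) \<in> borel_measurable lborel" by simp
    qed
    show "AE x in lebesgue. norm (indicator (ball c R) x *\<^sub>R g x) \<le> norm (M * indicator (ball c R) x)"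
      using M by (intro AE_I2) (auto split: split_indicator)
  qed
qed

lemma cont_L2:
  fixes g :: "real^'n::finite \<Rightarrow> real"
  assumes g: "continuous_on UNIV g"
  shows "L2_on (ball c R) g"
proof -
  have "set_integrable lebesgue (ball c R) g" by (rule cont_set_int[OF g])
  then have "set_borel_measurable lebesgue (ball c R) g"
    unfolding set_integrable_def set_borel_measurable_def by (rule borel_measurable_integrable)
  moreover have "set_integrable lebesgue (ball c R) (\<lambda>x. (g x)\<^sup>2)"
    by (rule cont_set_int) (use g in \<open>auto intro!: continuous_intros\<close>)
  ultimately show ?thesis by (simp add: L2_on_def)
qed

lemma L2_diff:
  fixes f g :: "real^'n::finite \<Rightarrow> real"
  assumes f: "L2_on B f" and g: "L2_on B g"
  shows "L2_on B (\<lambda>x. f x - g x)"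
proof -
  have mf: "(\<lambda>x. indicator B x * f x) \<in> borel_measurable lebesgue"
    and mg: "(\<lambda>x. indicator B x * g x) \<in> borel_measurable lebesgue"
    using f g by (simp_all add: L2_on_def set_borel_measurable_def)
  have m: "(\<lambda>x. indicator B x * (f x - g x)) \<in> borel_measurable lebesgue"
  proof -
    have "(\<lambda>x. indicator B x * f x - indicator B x * g x) \<in> borel_measurable lebesgue"
      using mf mg by measurable
    then show ?thesis by (simp add: algebra_simps)
  qed
  have i2: "integrable lebesgue (\<lambda>x. indicator B x * (f x)\<^sup>2)" "integrable lebesgue (\<lambda>x. indicator B x * (g x)\<^sup>2)"
    using f g by (simp_all add: L2_on_def set_integrable_def)
  have "integrable lebesgue (\<lambda>x. indicator B x * (f x - g x)\<^sup>2)"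
  proof (rule Bochner_Integration.integrable_bound)
    show "integrable lebesgue (\<lambda>x. 2 * (indicator B x * (f x)\<^sup>2) + 2 * (indicator B x * (g x)\<^sup>2))"
      using i2 by (intro Bochner_Integration.integrable_add Bochner_Integration.integrable_mult_right)
    have "(\<lambda>x. (indicator B x * (f x - g x)) * (indicator B x * (f x - g x))) \<in> borel_measurable lebesgue"
      using m by measurable
    moreover have "(\<lambda>x. (indicator B x * (f x - g x)) * (indicator B x * (f x - g x))) = (\<lambda>x. indicator B x * (f x - g x)\<^sup>2)"
      by (auto simp: fun_eq_iff power2_eq_square split: split_indicator)
    ultimately show "(\<lambda>x. indicator B x * (f x - g x)\<^sup>2) \<in> borel_measurable lebesgue"
      by simp
    show "AE x in lebesgue. norm (indicator B x * (f x - g x)\<^sup>2) \<le> norm (2 * (indicator B x * (f x)\<^sup>2) + 2 * (indicator B x * (g x)\<^sup>2))"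
    proof (intro AE_I2)
      fix x
      have "(f x - g x)\<^sup>2 \<le> 2 * (f x)\<^sup>2 + 2 * (g x)\<^sup>2"
        using zero_le_power2[of "f x + g x"] by (simp add: power2_eq_square algebra_simps)
      then show "norm (indicator B x * (f x - g x)\<^sup>2) \<le> norm (2 * (indicator B x * (f x)\<^sup>2) + 2 * (indicator B x * (g x)\<^sup>2))"
        by (simp split: split_indicator)
    qed
  qed
  then show ?thesis using m by (simp add: L2_on_def set_integrable_def set_borel_measurable_def)
qed

lemma cont_set_int_cball:
  fixes g :: "real^'n::finite \<Rightarrow> real"
  assumes g: "continuous_on (cball c R) g"
  shows "set_integrable lebesgue (ball c R) g"
proof -
  obtain M where M: "M \<ge> 0" "\<And>x. x \<in> cball c R \<Longrightarrow> \<bar>g x\<bar> \<le> M"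
    using cont_bounded_cball[OF g] by blast
  have i1: "integrable lebesgue (\<lambda>x. indicator (ball c R) x :: real)"
    using ball_fin[of c R] by (intro integrable_real_indicator) auto
  show ?thesis unfolding set_integrable_def
  proof (rule Bochner_Integration.integrable_bound)
    show "integrable lebesgue (\<lambda>x. M * indicator (ball c R) x)"
      by (rule Bochner_Integration.integrable_mult_right[OF i1])
    show "(\<lambda>x. indicator (ball c R) x *\<^sub>R g x) \<in> borel_measurable lebesgue"
    proof (rule measurable_completion)
      have "(\<lambda>x. indicator (ball c R) x *\<^sub>R g x) \<in> borel_measurable borel"
        by (rule borel_measurable_continuous_on_indicator) (auto intro: continuous_on_subset[OF g])
      then show "(\<lambda>x. indicator (ball c R) x *\<^sub>R g x) \<in> borel_measurable lborel" by simp
    qed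
    show "AE x in lebesgue. norm (indicator (ball c R) x *\<^sub>R g x) \<le> norm (M * indicator (ball c R) x)"
      using M by (intro AE_I2) (auto split: split_indicator)
  qed
qed

lemma cont_meas: "continuous_on UNIV (g :: real^'n::finite \<Rightarrow> real) \<Longrightarrow> g \<in> borel_measurable lebesgue"
  by (rule measurable_completion) (simp add: borel_measurable_continuous_onI)

lemma weak_id:
  fixes u \<phi> \<theta> :: "real^'n::finite \<Rightarrow> real"
  assumes HD: "H2_derivs (ball c R) u G" and helm: "helmholtz_weak (ball c R) k u \<phi>"
    and t\<theta>: "test_fun (ball c R) \<theta>"
  shows "(LINT x:ball c R|lebesgue. \<phi> x * \<theta> x)
       = (LINT x:ball c R|lebesgue. ((\<Sum>i\<in>UNIV. G [i,i] x) + k\<^sup>2 * u x) * \<theta> x)"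
proof -
  have G0: "G [] = u" and L2G: "\<And>is. length is \<le> 2 \<Longrightarrow> L2_on (ball c R) (G is)"
    and WD: "\<And>is. length is \<le> 2 \<Longrightarrow> weak_deriv (ball c R) is u (G is)"
    using HD by (auto simp: H2_derivs_def)
  have Lu: "L2_on (ball c R) u" using L2G[of "[]"] G0 by simp
  have sm: "smooth_fun \<theta>" using t\<theta> by (simp add: test_fun_def)
  have cont: "continuous_on UNIV (iter_partial is \<theta>)" for "is" by (rule smooth_cont[OF sm])
  have c\<theta>: "continuous_on UNIV \<theta>" using cont[of "[]"] by (simp add: iter_partial_def)
  have h1: "(LINT x:ball c R|lebesgue. \<phi> x * \<theta> x) = (LINT x:ball c R|lebesgue. u x * (laplacian \<theta> x + k\<^sup>2 * \<theta> x))"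
    using helm t\<theta> by (simp add: helmholtz_weak_def)
  have pw: "u x * (laplacian \<theta> x + k\<^sup>2 * \<theta> x) = (\<Sum>i\<in>UNIV. u x * iter_partial [i,i] \<theta> x) + k\<^sup>2 * (u x * \<theta> x)" for x
    by (simp add: laplacian_def sum_distrib_left algebra_simps)
  have pw2: "((\<Sum>i\<in>UNIV. G [i,i] x) + k\<^sup>2 * u x) * \<theta> x = (\<Sum>i\<in>UNIV. G [i,i] x * \<theta> x) + k\<^sup>2 * (u x * \<theta> x)" for x
    by (simp add: sum_distrib_right distrib_right mult.assoc)
  have i1: "set_integrable lebesgue (ball c R) (\<lambda>x. u x * iter_partial [i,i] \<theta> x)" for i
    by (rule L2_mult_cont[OF Lu cont])
  have i2: "set_integrable lebesgue (ball c R) (\<lambda>x. u x * \<theta> x)"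
    by (rule L2_mult_cont[OF Lu c\<theta>])
  have i3: "set_integrable lebesgue (ball c R) (\<lambda>x. G [i,i] x * \<theta> x)" for i
    by (rule L2_mult_cont[OF L2G c\<theta>]) simp
  have wd: "(LINT x:ball c R|lebesgue. u x * iter_partial [i,i] \<theta> x) = (LINT x:ball c R|lebesgue. G [i,i] x * \<theta> x)" for i
    using WD[of "[i,i]"] t\<theta> by (simp add: weak_deriv_def)
  note s1 = set_int_sum[where I=UNIV and f="\<lambda>i x. u x * iter_partial [i,i] \<theta> x", OF _ i1, simplified]
  note s3 = set_int_sum[where I=UNIV and f="\<lambda>i x. G [i,i] x * \<theta> x", OF _ i3, simplified]
  have "(LINT x:ball c R|lebesgue. u x * (laplacian \<theta> x + k\<^sup>2 * \<theta> x))
      = (LINT x:ball c R|lebesgue. (\<Sum>i\<in>UNIV. u x * iter_partial [i,i] \<theta> x) + k\<^sup>2 * (u x * \<theta> x))"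
    by (simp only: pw)
  also have "\<dots> = (\<Sum>i\<in>UNIV. LINT x:ball c R|lebesgue. u x * iter_partial [i,i] \<theta> x) + k\<^sup>2 * (LINT x:ball c R|lebesgue. u x * \<theta> x)"
    using set_integral_add(2)[OF conjunct1[OF s1] set_integrable_mult_right[OF i2]] conjunct2[OF s1] by simp
  also have "\<dots> = (\<Sum>i\<in>UNIV. LINT x:ball c R|lebesgue. G [i,i] x * \<theta> x) + k\<^sup>2 * (LINT x:ball c R|lebesgue. u x * \<theta> x)"
    by (simp add: wd)
  also have "\<dots> = (LINT x:ball c R|lebesgue. (\<Sum>i\<in>UNIV. G [i,i] x * \<theta> x) + k\<^sup>2 * (u x * \<theta> x))"
    using set_integral_add(2)[OF conjunct1[OF s3] set_integrable_mult_right[OF i2]] conjunct2[OF s3] by simp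
  also have "\<dots> = (LINT x:ball c R|lebesgue. ((\<Sum>i\<in>UNIV. G [i,i] x) + k\<^sup>2 * u x) * \<theta> x)"
    by (simp only: pw2)
  finally show ?thesis using h1 by simp
qed

lemma w_orth:
  fixes u :: "real^'n::finite \<Rightarrow> real" and \<psi> :: "nat \<Rightarrow> real^'n \<Rightarrow> real"
  assumes HD: "H2_derivs (ball c R) u G"
    and t\<psi>: "\<And>j. test_fun (ball c R) (\<psi> j)"
    and conv: "\<And>is. length is \<le> 2 \<Longrightarrow>
        (\<lambda>j. LINT x:ball c R|lebesgue. (iter_partial is (\<psi> j) x - G is x)\<^sup>2) \<longlonglongrightarrow> 0"
  shows "(LINT x:ball c R|lebesgue. ((\<Sum>i\<in>UNIV. G [i,i] x) + k\<^sup>2 * u x) * cos (k * (x$l - c$l))) = 0"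
proof -
  define B where "B = ball c R"
  define v where "v x = cos (k * (x$l - c$l))" for x :: "real^'n"
  have cv: "continuous_on UNIV v" unfolding v_def by (intro continuous_intros)
  have G0: "G [] = u" and L2G: "\<And>is. length is \<le> 2 \<Longrightarrow> L2_on B (G is)"
    using HD by (auto simp: H2_derivs_def B_def)
  have Lu: "L2_on B u" using L2G[of "[]"] G0 by simp
  have ip0: "iter_partial [] f = f" for f :: "real^'n \<Rightarrow> real" by (simp add: iter_partial_def)
  have sm: "smooth_fun (\<psi> j)" for j using t\<psi>[of j] by (simp add: test_fun_def)
  have cp: "continuous_on UNIV (iter_partial is (\<psi> j))" for "is" j by (rule smooth_cont[OF sm])
  have cp0: "continuous_on UNIV (\<psi> j)" for j using cp[of "[]" j] by (simp add: ip0)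
  define A where "A j = (LINT x:B|lebesgue. ((\<Sum>i\<in>UNIV. iter_partial [i,i] (\<psi> j) x) + k\<^sup>2 * \<psi> j x) * v x)" for j
  define W where "W = (LINT x:B|lebesgue. ((\<Sum>i\<in>UNIV. G [i,i] x) + k\<^sup>2 * u x) * v x)"
  have A0: "A j = 0" for j
  proof -
    define S where "S = closure {x. \<psi> j x \<noteq> 0}"
    note ts = test_fun_support[OF t\<psi>[of j], folded S_def]
    have Z: "\<And>x. x \<notin> S \<Longrightarrow> iter_partial is (\<psi> j) x = 0" for "is"
      by (rule iter_partial_zero_outside[OF ts(3) ts(1) ts(2)])
    have "A j = integral\<^sup>L lborel (\<lambda>x. ((\<Sum>i\<in>UNIV. iter_partial [i,i] (\<psi> j) x) + k\<^sup>2 * \<psi> j x) * v x)"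
      unfolding A_def
    proof (rule set_integral_ball_eq)
      show "(\<lambda>x. ((\<Sum>i\<in>UNIV. iter_partial [i,i] (\<psi> j) x) + k\<^sup>2 * \<psi> j x) * v x) \<in> borel_measurable borel"
        by (rule borel_measurable_continuous_onI) (use cp cp0 cv in \<open>auto intro!: continuous_intros\<close>)
      fix x assume "x \<notin> B"
      then have "x \<notin> S" using ts(4) by (auto simp: B_def)
      then show "((\<Sum>i\<in>UNIV. iter_partial [i,i] (\<psi> j) x) + k\<^sup>2 * \<psi> j x) * v x = 0"
        using Z ts(2) by simp
    qed
    also have "\<dots> = 0" unfolding v_def by (rule psi_orth[OF t\<psi>])
    finally show ?thesis .
  qed
  define g where "g i j x = iter_partial [i,i] (\<psi> j) x - G [i,i] x" for i j x
  define g0 where "g0 j x = \<psi> j x - u x" for j x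
  have Lg: "L2_on B (g i j)" for i j
    unfolding g_def[abs_def] by (rule L2_diff[OF cont_L2[OF cp, of c R, folded B_def] L2G]) simp
  have Lg0: "L2_on B (g0 j)" for j
    unfolding g0_def[abs_def] by (rule L2_diff[OF cont_L2[OF cp0, of c R, folded B_def] Lu])
  have ig: "set_integrable lebesgue B (\<lambda>x. g i j x * v x)" for i j
    unfolding B_def by (rule L2_mult_cont[OF Lg[unfolded B_def] cv])
  have ig0: "set_integrable lebesgue B (\<lambda>x. g0 j x * v x)" for j
    unfolding B_def by (rule L2_mult_cont[OF Lg0[unfolded B_def] cv])
  have iA: "set_integrable lebesgue B (\<lambda>x. ((\<Sum>i\<in>UNIV. iter_partial [i,i] (\<psi> j) x) + k\<^sup>2 * \<psi> j x) * v x)" for j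
    unfolding B_def by (rule cont_set_int) (use cp cp0 cv in \<open>auto intro!: continuous_intros\<close>)
  have iW: "set_integrable lebesgue B (\<lambda>x. ((\<Sum>i\<in>UNIV. G [i,i] x) + k\<^sup>2 * u x) * v x)"
  proof -
    have pw: "((\<Sum>i\<in>UNIV. G [i,i] x) + k\<^sup>2 * u x) * v x = (\<Sum>i\<in>UNIV. G [i,i] x * v x) + k\<^sup>2 * (u x * v x)" for x
      by (simp add: sum_distrib_right distrib_right mult.assoc)
    have "set_integrable lebesgue B (\<lambda>x. G [i,i] x * v x)" for i
      unfolding B_def by (rule L2_mult_cont[OF L2G[unfolded B_def] cv]) simp
    then have "set_integrable lebesgue B (\<lambda>x. \<Sum>i\<in>UNIV. G [i,i] x * v x)"
      using set_int_sum[where I=UNIV and f="\<lambda>i x. G [i,i] x * v x"] by simp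
    moreover have "set_integrable lebesgue B (\<lambda>x. u x * v x)"
      unfolding B_def by (rule L2_mult_cont[OF Lu[unfolded B_def] cv])
    ultimately show ?thesis unfolding pw by (intro set_integral_add(1) set_integrable_mult_right) auto
  qed
  have diff: "A j - W = (\<Sum>i\<in>UNIV. LINT x:B|lebesgue. g i j x * v x) + k\<^sup>2 * (LINT x:B|lebesgue. g0 j x * v x)" for j
  proof -
    have pw: "((\<Sum>i\<in>UNIV. iter_partial [i,i] (\<psi> j) x) + k\<^sup>2 * \<psi> j x) * v x - ((\<Sum>i\<in>UNIV. G [i,i] x) + k\<^sup>2 * u x) * v x
        = (\<Sum>i\<in>UNIV. g i j x * v x) + k\<^sup>2 * (g0 j x * v x)" for x
    proof -
      have "(\<Sum>i\<in>UNIV. g i j x * v x) = (\<Sum>i\<in>UNIV. iter_partial [i,i] (\<psi> j) x * v x) - (\<Sum>i\<in>UNIV. G [i,i] x * v x)"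
        by (simp add: g_def left_diff_distrib sum_subtractf)
      moreover have "(\<Sum>i\<in>UNIV. iter_partial [i,i] (\<psi> j) x) * v x = (\<Sum>i\<in>UNIV. iter_partial [i,i] (\<psi> j) x * v x)"
        "(\<Sum>i\<in>UNIV. G [i,i] x) * v x = (\<Sum>i\<in>UNIV. G [i,i] x * v x)"
        by (simp_all add: sum_distrib_right)
      ultimately show ?thesis unfolding distrib_right g0_def by (simp add: algebra_simps)
    qed
    have s: "set_integrable lebesgue B (\<lambda>x. \<Sum>i\<in>UNIV. g i j x * v x) \<and>
        (LINT x:B|lebesgue. \<Sum>i\<in>UNIV. g i j x * v x) = (\<Sum>i\<in>UNIV. LINT x:B|lebesgue. g i j x * v x)"
      using set_int_sum[where I=UNIV and f="\<lambda>i x. g i j x * v x"] ig by simp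
    have "A j - W = (LINT x:B|lebesgue. ((\<Sum>i\<in>UNIV. iter_partial [i,i] (\<psi> j) x) + k\<^sup>2 * \<psi> j x) * v x - ((\<Sum>i\<in>UNIV. G [i,i] x) + k\<^sup>2 * u x) * v x)"
      unfolding A_def W_def by (rule set_integral_diff(2)[OF iA iW, symmetric])
    also have "\<dots> = (LINT x:B|lebesgue. (\<Sum>i\<in>UNIV. g i j x * v x) + k\<^sup>2 * (g0 j x * v x))"
      by (simp only: pw)
    also have "\<dots> = (\<Sum>i\<in>UNIV. LINT x:B|lebesgue. g i j x * v x) + k\<^sup>2 * (LINT x:B|lebesgue. g0 j x * v x)"
      using set_integral_add(2)[OF conjunct1[OF s] set_integrable_mult_right[OF ig0]] conjunct2[OF s] by simp
    finally show ?thesis .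
  qed
  have Bs: "B \<in> sets lebesgue" by (simp add: B_def)
  have fin: "emeasure lebesgue B < \<infinity>" unfolding B_def by (rule ball_fin)
  have mv: "v \<in> borel_measurable lebesgue" by (rule cont_meas[OF cv])
  have vb: "\<bar>v x\<bar> \<le> 1" for x by (simp add: v_def)
  have lim_i: "(\<lambda>j. LINT x:B|lebesgue. g i j x * v x) \<longlonglongrightarrow> 0" for i
  proof (rule conv0[OF _ _ mv vb fin Bs])
    show "set_borel_measurable lebesgue B (g i j)" "set_integrable lebesgue B (\<lambda>x. (g i j x)\<^sup>2)" for j
      using Lg[of i j] by (auto simp: L2_on_def)
    show "(\<lambda>j. LINT x:B|lebesgue. (g i j x)\<^sup>2) \<longlonglongrightarrow> 0"
      using conv[of "[i,i]"] by (simp add: g_def B_def)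
  qed
  have lim_0: "(\<lambda>j. LINT x:B|lebesgue. g0 j x * v x) \<longlonglongrightarrow> 0"
  proof (rule conv0[OF _ _ mv vb fin Bs])
    show "set_borel_measurable lebesgue B (g0 j)" "set_integrable lebesgue B (\<lambda>x. (g0 j x)\<^sup>2)" for j
      using Lg0[of j] by (auto simp: L2_on_def)
    show "(\<lambda>j. LINT x:B|lebesgue. (g0 j x)\<^sup>2) \<longlonglongrightarrow> 0"
      using conv[of "[]"] by (simp add: g0_def B_def ip0 G0)
  qed
  have "(\<lambda>j. (\<Sum>i\<in>UNIV. LINT x:B|lebesgue. g i j x * v x) + k\<^sup>2 * (LINT x:B|lebesgue. g0 j x * v x)) \<longlonglongrightarrow> 0 + k\<^sup>2 * 0"
    by (intro tendsto_add tendsto_mult tendsto_const tendsto_null_sum lim_i lim_0)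
  then have "(\<lambda>j. A j - W) \<longlonglongrightarrow> 0" by (simp add: diff)
  then have "(\<lambda>j. - W) \<longlonglongrightarrow> 0" by (simp add: A0)
  then have "W = 0" by (metis LIMSEQ_const_iff neg_equal_0_iff_equal)
  then show ?thesis by (simp add: W_def B_def v_def)
qed

lemma theta_cont: "continuous_on UNIV (\<lambda>x. chi c R m x * cos (k * (x$l - c$l)))"
  using Sm_line[OF Sm.Smult[OF chi_Sm v_Sm]] by blast

lemma dom_lim:
  fixes F :: "real^'n::finite \<Rightarrow> real"
  assumes iF: "set_integrable lebesgue (ball c R) F"
  shows "(\<lambda>m. LINT x:ball c R|lebesgue. F x * (chi c R m x * cos (k * (x$l - c$l))))
     \<longlonglongrightarrow> (LINT x:ball c R|lebesgue. F x * cos (k * (x$l - c$l)))"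
  unfolding set_lebesgue_integral_def
proof (rule integral_dominated_convergence[where w="\<lambda>x. norm (indicator (ball c R) x *\<^sub>R F x)"])
  have mF: "(\<lambda>x. indicator (ball c R) x *\<^sub>R F x) \<in> borel_measurable lebesgue"
    using iF unfolding set_integrable_def by (rule borel_measurable_integrable)
  have mv: "(\<lambda>x. cos (k * (x$l - c$l))) \<in> borel_measurable lebesgue"
    by (rule cont_meas) (intro continuous_intros)
  have "(\<lambda>x. (indicator (ball c R) x *\<^sub>R F x) * cos (k * (x$l - c$l))) \<in> borel_measurable lebesgue"
    using mF mv by measurable
  then show "(\<lambda>x. indicator (ball c R) x *\<^sub>R (F x * cos (k * (x$l - c$l)))) \<in> borel_measurable lebesgue"
    by (simp add: mult.assoc)
  fix m
  have mt: "(\<lambda>x. chi c R m x * cos (k * (x$l - c$l))) \<in> borel_measurable lebesgue"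
    by (rule cont_meas[OF theta_cont])
  have "(\<lambda>x. (indicator (ball c R) x *\<^sub>R F x) * (chi c R m x * cos (k * (x$l - c$l)))) \<in> borel_measurable lebesgue"
    using mF mt by measurable
  then show "(\<lambda>x. indicator (ball c R) x *\<^sub>R (F x * (chi c R m x * cos (k * (x$l - c$l))))) \<in> borel_measurable lebesgue"
    by (simp add: mult.assoc)
  show "AE x in lebesgue. norm (indicator (ball c R) x *\<^sub>R (F x * (chi c R m x * cos (k * (x$l - c$l)))))
      \<le> norm (indicator (ball c R) x *\<^sub>R F x)"
  proof (intro AE_I2)
    fix x
    have "\<bar>chi c R m x * cos (k * (x$l - c$l))\<bar> \<le> 1 * 1"
      unfolding abs_mult using chi_bounds[of c R m x] by (intro mult_mono) auto
    then have "\<bar>F x * (chi c R m x * cos (k * (x$l - c$l)))\<bar> \<le> \<bar>F x\<bar>"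
      by (simp add: abs_mult mult_left_le)
    then show "norm (indicator (ball c R) x *\<^sub>R (F x * (chi c R m x * cos (k * (x$l - c$l)))))
      \<le> norm (indicator (ball c R) x *\<^sub>R F x)"
      by (simp split: split_indicator)
  qed
next
  show "integrable lebesgue (\<lambda>x. norm (indicator (ball c R) x *\<^sub>R F x))"
    using iF unfolding set_integrable_def by (rule integrable_norm)
  show "AE x in lebesgue. (\<lambda>m. indicator (ball c R) x *\<^sub>R (F x * (chi c R m x * cos (k * (x$l - c$l)))))
      \<longlonglongrightarrow> indicator (ball c R) x *\<^sub>R (F x * cos (k * (x$l - c$l)))"
  proof (intro AE_I2)
    fix x
    show "(\<lambda>m. indicator (ball c R) x *\<^sub>R (F x * (chi c R m x * cos (k * (x$l - c$l)))))
      \<longlonglongrightarrow> indicator (ball c R) x *\<^sub>R (F x * cos (k * (x$l - c$l)))"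
    proof (cases "x \<in> ball c R")
      case True
      have "(\<lambda>m. indicator (ball c R) x *\<^sub>R (F x * (chi c R m x * cos (k * (x$l - c$l)))))
        \<longlonglongrightarrow> indicator (ball c R) x *\<^sub>R (F x * (1 * cos (k * (x$l - c$l))))"
        by (intro tendsto_intros chi_lim[OF True])
      then show ?thesis by simp
    qed simp
  qed
qed

lemma phi_orth:
  fixes u \<phi> :: "real^'n::finite \<Rightarrow> real"
  assumes R: "R > 0" and H0: "H2_0 (ball c R) u" and helm: "helmholtz_weak (ball c R) k u \<phi>"
    and c\<phi>: "continuous_on (cball c R) \<phi>"
  shows "(LINT x:ball c R|lebesgue. \<phi> x * cos (k * (x$l - c$l))) = 0"
proof -
  obtain G \<psi> where HD: "H2_derivs (ball c R) u G" and t\<psi>: "\<And>j. test_fun (ball c R) (\<psi> j)"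
    and conv: "\<And>is. length is \<le> 2 \<Longrightarrow>
        (\<lambda>j. LINT x:ball c R|lebesgue. (iter_partial is (\<psi> j) x - G is x)\<^sup>2) \<longlonglongrightarrow> 0"
    using H0 unfolding H2_0_def by blast
  have G0: "G [] = u" and L2G: "\<And>is. length is \<le> 2 \<Longrightarrow> L2_on (ball c R) (G is)"
    using HD by (auto simp: H2_derivs_def)
  define w where "w x = (\<Sum>i\<in>UNIV. G [i,i] x) + k\<^sup>2 * u x" for x
  have iw: "set_integrable lebesgue (ball c R) w"
  proof -
    have "set_integrable lebesgue (ball c R) (G [i,i])" for i by (rule L2_const[OF L2G]) simp
    then have "set_integrable lebesgue (ball c R) (\<lambda>x. \<Sum>i\<in>UNIV. G [i,i] x)"
      using set_int_sum[where I=UNIV and f="\<lambda>i x. G [i,i] x"] by simp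
    moreover have "set_integrable lebesgue (ball c R) u" using L2_const[OF L2G[of "[]"]] G0 by simp
    ultimately show ?thesis unfolding w_def[abs_def]
      by (intro set_integral_add(1) set_integrable_mult_right) auto
  qed
  have eq: "(LINT x:ball c R|lebesgue. \<phi> x * (chi c R m x * cos (k * (x$l - c$l))))
      = (LINT x:ball c R|lebesgue. w x * (chi c R m x * cos (k * (x$l - c$l))))" for m
    unfolding w_def by (rule weak_id[OF HD helm theta_test[OF R]])
  have l1: "(\<lambda>m. LINT x:ball c R|lebesgue. \<phi> x * (chi c R m x * cos (k * (x$l - c$l))))
     \<longlonglongrightarrow> (LINT x:ball c R|lebesgue. \<phi> x * cos (k * (x$l - c$l)))"
    by (rule dom_lim[OF cont_set_int_cball[OF c\<phi>]])
  have l2: "(\<lambda>m. LINT x:ball c R|lebesgue. \<phi> x * (chi c R m x * cos (k * (x$l - c$l))))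
     \<longlonglongrightarrow> (LINT x:ball c R|lebesgue. w x * cos (k * (x$l - c$l)))"
    unfolding eq by (rule dom_lim[OF iw])
  have "(LINT x:ball c R|lebesgue. w x * cos (k * (x$l - c$l))) = 0"
    unfolding w_def by (rule w_orth[OF HD t\<psi> conv])
  then show ?thesis using LIMSEQ_unique[OF l1 l2] by simp
qed

lemma small_case:
  fixes u \<phi> :: "real^'n::finite \<Rightarrow> real"
  assumes R: "R > 0" and kR: "k * R \<le> 1" and k: "k \<ge> 0" and a: "0 \<le> \<alpha>" "\<alpha> \<le> 1"
    and H0: "H2_0 (ball c R) u" and helm: "helmholtz_weak (ball c R) k u \<phi>"
    and c\<phi>: "continuous_on (cball c R) \<phi>"
    and bq: "bdd_above (holder_quotients \<alpha> (cball c R) \<phi>)"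
    and x0: "x0 \<in> sphere c R"
  shows "\<bar>\<phi> x0\<bar> \<le> 2 * R powr \<alpha> * Sup (holder_quotients \<alpha> (cball c R) \<phi>)"
proof -
  define Q where "Q = Sup (holder_quotients \<alpha> (cball c R) \<phi>)"
  define B where "B = ball c R"
  obtain l :: 'n where True by blast
  define v where "v x = cos (k * (x$l - c$l))" for x :: "real^'n"
  have c1: "cos (1::real) > 0" using pi_gt3 by (intro cos_gt_zero) auto
  have vpos: "cos 1 \<le> v x" if "x \<in> B" for x
  proof -
    have "\<bar>x$l - c$l\<bar> \<le> norm (x - c)" using component_le_norm_cart[of "x - c" l] by simp
    also have "\<dots> < R" using that by (simp add: B_def dist_norm norm_minus_commute)
    finally have "\<bar>k * (x$l - c$l)\<bar> \<le> k * R" using k by (simp add: abs_mult mult_left_mono)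
    then have t: "\<bar>k * (x$l - c$l)\<bar> \<le> 1" using kR by simp
    have "cos 1 \<le> cos \<bar>k * (x$l - c$l)\<bar>"
      using t pi_gt3 by (subst cos_mono_le_eq) auto
    then show ?thesis by (simp add: v_def)
  qed
  have x0c: "x0 \<in> cball c R" using x0 by simp
  have hq: "\<bar>\<phi> x0 - \<phi> x\<bar> \<le> Q * (2 * R) powr \<alpha>" if "x \<in> B" for x
  proof -
    have xc: "x \<in> cball c R" using that by (simp add: B_def)
    have ne: "x0 \<noteq> x" using that x0 by (auto simp: B_def)
    have dpos: "dist x0 x > 0" using ne by simp
    have "\<bar>\<phi> x0 - \<phi> x\<bar> / dist x0 x powr \<alpha> \<in> holder_quotients \<alpha> (cball c R) \<phi>"
      unfolding holder_quotients_def using x0c xc ne by blast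
    then have q: "\<bar>\<phi> x0 - \<phi> x\<bar> / dist x0 x powr \<alpha> \<le> Q"
      unfolding Q_def by (rule cSup_upper[OF _ bq])
    have "0 \<le> \<bar>\<phi> x0 - \<phi> x\<bar> / dist x0 x powr \<alpha>" by simp
    then have Q0: "Q \<ge> 0" using q by linarith
    have "\<bar>\<phi> x0 - \<phi> x\<bar> \<le> Q * dist x0 x powr \<alpha>"
      using q dpos by (simp add: divide_le_eq)
    also have "dist x0 x \<le> 2 * R"
      using dist_triangle[of x0 x c] x0 that by (auto simp: B_def dist_commute)
    then have "Q * dist x0 x powr \<alpha> \<le> Q * (2 * R) powr \<alpha>"
      using Q0 a by (intro mult_left_mono powr_mono2) auto
    finally show ?thesis .
  qed
  have Q0: "Q \<ge> 0"
  proof -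
    have "c \<in> B" using R by (simp add: B_def)
    from hq[OF this] have "0 \<le> Q * (2 * R) powr \<alpha>" by (meson abs_ge_zero order_trans)
    moreover have "(2 * R) powr \<alpha> > 0" using R by simp
    ultimately show ?thesis by (simp add: zero_le_mult_iff)
  qed
  have cv: "continuous_on UNIV v" unfolding v_def by (intro continuous_intros)
  have iv: "set_integrable lebesgue B v" unfolding B_def by (rule cont_set_int[OF cv])
  have i\<phi>v: "set_integrable lebesgue B (\<lambda>x. \<phi> x * v x)" unfolding B_def
    by (rule cont_set_int_cball) (use c\<phi> continuous_on_subset[OF cv subset_UNIV] in \<open>auto intro!: continuous_intros\<close>)
  have orth: "(LINT x:B|lebesgue. \<phi> x * v x) = 0"
    unfolding B_def v_def by (rule phi_orth[OF R H0 helm c\<phi>])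
  define I where "I = (LINT x:B|lebesgue. v x)"
  define M where "M = Q * (2 * R) powr \<alpha>"
  have i0v: "set_integrable lebesgue B (\<lambda>x. \<phi> x0 * v x)" using iv by auto
  have iMv: "set_integrable lebesgue B (\<lambda>x. M * v x)" using iv by auto
  have idv: "set_integrable lebesgue B (\<lambda>x. \<phi> x0 * v x - \<phi> x * v x)"
    by (rule set_integral_diff(1)[OF i0v i\<phi>v])
  have imdv: "set_integrable lebesgue B (\<lambda>x. - (\<phi> x0 * v x - \<phi> x * v x))"
    using set_integral_diff(1)[OF i\<phi>v i0v] by simp
  have e1: "(LINT x:B|lebesgue. \<phi> x0 * v x - \<phi> x * v x) = \<phi> x0 * I"
    using set_integral_diff(2)[OF i0v i\<phi>v] orth by (simp add: I_def)
  have le1: "(LINT x:B|lebesgue. \<phi> x0 * v x - \<phi> x * v x) \<le> (LINT x:B|lebesgue. M * v x)"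
  proof (rule set_integral_mono[OF idv iMv])
    fix x assume xB: "x \<in> B"
    have "\<phi> x0 - \<phi> x \<le> M" using hq[OF xB] unfolding M_def by linarith
    moreover have "0 \<le> v x" using vpos[OF xB] c1 by linarith
    ultimately have "(\<phi> x0 - \<phi> x) * v x \<le> M * v x" by (rule mult_right_mono)
    then show "\<phi> x0 * v x - \<phi> x * v x \<le> M * v x" by (simp add: algebra_simps)
  qed
  have le2: "(LINT x:B|lebesgue. - (\<phi> x0 * v x - \<phi> x * v x)) \<le> (LINT x:B|lebesgue. M * v x)"
  proof (rule set_integral_mono[OF imdv iMv])
    fix x assume xB: "x \<in> B"
    have "\<phi> x - \<phi> x0 \<le> M" using hq[OF xB] unfolding M_def by linarith
    moreover have "0 \<le> v x" using vpos[OF xB] c1 by linarith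
    ultimately have "(\<phi> x - \<phi> x0) * v x \<le> M * v x" by (rule mult_right_mono)
    then show "- (\<phi> x0 * v x - \<phi> x * v x) \<le> M * v x" by (simp add: algebra_simps)
  qed
  have le2': "- (\<phi> x0 * I) \<le> M * I"
    using le2 e1 set_integral_uminus[OF idv] by (simp add: I_def)
  have le1': "\<phi> x0 * I \<le> M * I" using le1 e1 by (simp add: I_def)
  have Ipos: "I > 0"
  proof -
    have ic: "set_integrable lebesgue B (\<lambda>x. cos (1::real))"
      unfolding B_def by (rule cont_set_int) simp
    have "(LINT x:B|lebesgue. cos 1) \<le> I"
      unfolding I_def by (rule set_integral_mono[OF ic iv vpos])
    moreover have "(LINT x:B|lebesgue. cos 1) = measure lebesgue B * cos 1"
      using set_integral_const[of B lebesgue "cos (1::real)"] ball_fin[of c R] by (simp add: B_def)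
    moreover have "measure lebesgue B > 0"
      using content_ball_pos[OF R, of c] by (simp add: B_def)
    ultimately show ?thesis using c1 by (metis mult_pos_pos order_less_le_trans)
  qed
  have "\<bar>\<phi> x0\<bar> * I \<le> M * I" using le1' le2' by (cases "\<phi> x0 \<ge> 0") auto
  then have "\<bar>\<phi> x0\<bar> \<le> M" using Ipos by simp
  also have "M = Q * 2 powr \<alpha> * R powr \<alpha>" using R by (simp add: M_def powr_mult)
  also have "\<dots> \<le> Q * 2 * R powr \<alpha>"
  proof -
    have "2 powr \<alpha> \<le> 2 powr (1::real)" using a by (intro powr_mono) auto
    then show ?thesis using Q0 by (intro mult_right_mono mult_left_mono) auto
  qed
  finally show ?thesis by (simp add: Q_def mult_ac)
qed

theorem proposition2p6:
  fixes Rm k :: real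
  assumes "CARD('n::finite) \<ge> 2" and "Rm > 0" and "k \<ge> 0"
  shows "\<exists>C::real. \<forall>(c::real^'n) R \<alpha> u \<phi>.
           0 < R \<longrightarrow> R \<le> Rm \<longrightarrow> 0 \<le> \<alpha> \<longrightarrow> \<alpha> \<le> 1 \<longrightarrow>
           H2 (ball c R) u \<longrightarrow> H2_0 (ball c R) u \<longrightarrow>
           holder_space \<alpha> (cball c R) \<phi> \<longrightarrow>
           helmholtz_weak (ball c R) k u \<phi> \<longrightarrow>
           (SUP x\<in>sphere c R. \<bar>\<phi> x\<bar>) \<le> C * R powr \<alpha> * holder_norm \<alpha> (cball c R) \<phi>"
proof (intro exI[of _ "k + 2"] allI impI)
  fix c :: "real^'n" and R \<alpha> :: real and u \<phi> :: "real^'n \<Rightarrow> real"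
  assume R: "0 < R" and "R \<le> Rm" and a0: "0 \<le> \<alpha>" and a1: "\<alpha> \<le> 1"
    and "H2 (ball c R) u" and H0: "H2_0 (ball c R) u"
    and hs: "holder_space \<alpha> (cball c R) \<phi>" and helm: "helmholtz_weak (ball c R) k u \<phi>"
  have k: "k \<ge> 0" by fact
  have c\<phi>: "continuous_on (cball c R) \<phi>" and bd: "bounded (\<phi> ` cball c R)"
    and bq: "bdd_above (holder_quotients \<alpha> (cball c R) \<phi>)"
    using hs by (auto simp: holder_space_def)
  define Q where "Q = Sup (holder_quotients \<alpha> (cball c R) \<phi>)"
  define S where "S = (SUP x\<in>cball c R. \<bar>\<phi> x\<bar>)"
  obtain l :: 'n where True by blast
  define y where "y = c + R *\<^sub>R axis l 1"
  have yc: "y \<in> cball c R" and ys: "y \<in> sphere c R" using R by (auto simp: y_def dist_norm)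
  have cc: "c \<in> cball c R" using R by simp
  have bddS: "bdd_above ((\<lambda>x. \<bar>\<phi> x\<bar>) ` cball c R)"
  proof -
    obtain b where "\<forall>z\<in>\<phi> ` cball c R. norm z \<le> b" using bd unfolding bounded_iff by blast
    then show ?thesis by (auto intro!: bdd_aboveI[of _ b])
  qed
  have Sle: "\<bar>\<phi> x\<bar> \<le> S" if "x \<in> cball c R" for x
    unfolding S_def by (rule cSUP_upper[OF that bddS])
  have S0: "S \<ge> 0" using Sle[OF cc] by linarith
  have Q0: "Q \<ge> 0"
  proof -
    have ne: "c \<noteq> y" using R by (auto simp: y_def)
    have "\<bar>\<phi> c - \<phi> y\<bar> / dist c y powr \<alpha> \<in> holder_quotients \<alpha> (cball c R) \<phi>"
      unfolding holder_quotients_def using cc yc ne by blast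
    then have "\<bar>\<phi> c - \<phi> y\<bar> / dist c y powr \<alpha> \<le> Q" unfolding Q_def by (rule cSup_upper[OF _ bq])
    moreover have "0 \<le> \<bar>\<phi> c - \<phi> y\<bar> / dist c y powr \<alpha>" by simp
    ultimately show ?thesis by linarith
  qed
  have hn: "holder_norm \<alpha> (cball c R) \<phi> = S + Q" by (simp add: holder_norm_def S_def Q_def)
  have Rp: "R powr \<alpha> \<ge> 0" by simp
  have pt: "\<bar>\<phi> x0\<bar> \<le> (k + 2) * R powr \<alpha> * (S + Q)" if x0: "x0 \<in> sphere c R" for x0
  proof (cases "k * R \<le> 1")
    case True
    have "\<bar>\<phi> x0\<bar> \<le> 2 * R powr \<alpha> * Q"
      using small_case[OF R True k a0 a1 H0 helm c\<phi> bq x0] by (simp add: Q_def)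
    also have "\<dots> \<le> (k + 2) * R powr \<alpha> * (S + Q)"
      using k S0 Q0 Rp by (intro mult_mono) auto
    finally show ?thesis .
  next
    case False
    have "\<bar>\<phi> x0\<bar> \<le> S" using x0 by (intro Sle) auto
    also have "\<dots> \<le> S + Q" using Q0 by simp
    also have "\<dots> \<le> ((k + 2) * R powr \<alpha>) * (S + Q)"
    proof -
      have "1 \<le> (k + 2) * R powr \<alpha>"
      proof (cases "R \<ge> 1")
        case True
        then have "1 \<le> R powr \<alpha>" using a0 by (rule ge_one_powr_ge_zero)
        then have "(1::real) * 1 \<le> (k + 2) * R powr \<alpha>" using k by (intro mult_mono) auto
        then show ?thesis by simp
      next
        case False
        then have "R powr 1 \<le> R powr \<alpha>" using a1 R by (intro powr_mono') auto
        then have "R \<le> R powr \<alpha>" using R by simp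
        then have "(k + 2) * R \<le> (k + 2) * R powr \<alpha>" using k by (intro mult_left_mono) auto
        moreover have "1 \<le> (k + 2) * R" using \<open>\<not> k * R \<le> 1\<close> R by (simp add: algebra_simps)
        ultimately show ?thesis by linarith
      qed
      from mult_right_mono[OF this, of "S + Q"] show ?thesis using S0 Q0 by simp
    qed
    finally show ?thesis by simp
  qed
  have "(SUP x\<in>sphere c R. \<bar>\<phi> x\<bar>) \<le> (k + 2) * R powr \<alpha> * (S + Q)"
    using ys by (intro cSUP_least pt) auto
  then show "(SUP x\<in>sphere c R. \<bar>\<phi> x\<bar>) \<le> (k + 2) * R powr \<alpha> * holder_norm \<alpha> (cball c R) \<phi>"
    by (simp add: hn)
qed

end
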